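(* Let $P$ be a poset on $[n]$ with natural labeling and let all edge weights $x_1,\dots,x_n$ be strictly positive. Then each of the four continuous time Markov chains on $\mathcal{L}(P)$ given by the uniform transposition graph, the transposition graph, the uniform promotion graph, and the promotion graph is irreducible, and hence has a unique stationary distribution.
   Context: $\mathcal{L}(P)=\{\pi\in S_n : i\prec j \Rightarrow \pi^{-1}_i<\pi^{-1}_j\}$ in one-line notation $\pi=\pi_1\cdots\pi_n$. $\pi\tau_i$ ($1\le i<n$) swaps $\pi_i,\pi_{i+1}$ if they are incomparable and is $\pi$ otherwise; operators act on the right; $\partial_j=\tau_j\cdots\tau_{n-1}$ ($1\le j\le n$). All four graphs have vertex set $\mathcal{L}(P)$: uniform transposition graph has edges $\pi\to\pi\tau_j$ of weight $x_j$ ($j\in[n-1]$); transposition graph has edges $\pi\to\pi\tau_j$ of weight $x_{\pi_j}$; uniform promotion graph has edges $\pi\to\pi\partial_j$ of weight $x_j$ ($j\in[n]$); promotion graph has edges $\pi\to\pi\partial_j$ of weight $x_{\pi_j}$. The associated continuous time chain traverses each edge at rate equal to its weight; it is irreducible if its digraph is strongly connected. *)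

theory Defs
  imports Complex_Main
begin

text \<open>Permutations are lists in one-line notation, with 1-based access pi_i = pi ! (i-1).\<close>

definition poset_on :: "nat \<Rightarrow> (nat \<times> nat) set \<Rightarrow> bool" where
  "poset_on n P \<longleftrightarrow> P \<subseteq> {1..n} \<times> {1..n} \<and> partial_order_on {1..n} P"

definition prec :: "(nat \<times> nat) set \<Rightarrow> nat \<Rightarrow> nat \<Rightarrow> bool" where
  "prec P i j \<longleftrightarrow> (i, j) \<in> P \<and> i \<noteq> j"

definition natural_labeling :: "nat \<Rightarrow> (nat \<times> nat) set \<Rightarrow> bool" where
  "natural_labeling n P \<longleftrightarrow> (\<forall>i j. prec P i j \<longrightarrow> i < j)"

definition ent :: "nat list \<Rightarrow> nat \<Rightarrow> nat" where
  "ent \<pi> i = \<pi> ! (i - 1)"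

definition is_perm :: "nat \<Rightarrow> nat list \<Rightarrow> bool" where
  "is_perm n \<pi> \<longleftrightarrow> length \<pi> = n \<and> distinct \<pi> \<and> set \<pi> = {1..n}"

definition inv_ent :: "nat list \<Rightarrow> nat \<Rightarrow> nat" where
  "inv_ent \<pi> i = (THE a. a \<in> {1..length \<pi>} \<and> ent \<pi> a = i)"

definition linext :: "nat \<Rightarrow> (nat \<times> nat) set \<Rightarrow> nat list set" where
  "linext n P = {\<pi>. is_perm n \<pi> \<and> (\<forall>i j. prec P i j \<longrightarrow> inv_ent \<pi> i < inv_ent \<pi> j)}"

definition incomparable :: "(nat \<times> nat) set \<Rightarrow> nat \<Rightarrow> nat \<Rightarrow> bool" where
  "incomparable P a b \<longleftrightarrow> \<not> prec P a b \<and> \<not> prec P b a"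

definition tau :: "(nat \<times> nat) set \<Rightarrow> nat list \<Rightarrow> nat \<Rightarrow> nat list" where
  "tau P \<pi> i = (if incomparable P (ent \<pi> i) (ent \<pi> (i + 1))
                then \<pi>[i - 1 := ent \<pi> (i + 1), i := ent \<pi> i] else \<pi>)"

text \<open>pi partial_j = pi tau_j tau_{j+1} ... tau_{n-1} (operators act on the right,
so tau_j is applied first).\<close>
definition prom :: "nat \<Rightarrow> (nat \<times> nat) set \<Rightarrow> nat list \<Rightarrow> nat \<Rightarrow> nat list" where
  "prom n P \<pi> j = fold (\<lambda>i \<sigma>. tau P \<sigma> i) [j..<n] \<pi>"

text \<open>A weighted (multi)digraph on vertex set V: from each vertex pi there is one edge
pi -> f pi j of weight w pi j for each label j in J.\<close>

definition rate :: "'v set \<Rightarrow> 'l set \<Rightarrow> ('v \<Rightarrow> 'l \<Rightarrow> 'v) \<Rightarrow> ('v \<Rightarrow> 'l \<Rightarrow> real) \<Rightarrow> 'v \<Rightarrow> 'v \<Rightarrow> real" where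
  "rate V J f w \<pi> \<sigma> = (\<Sum>j\<in>{j\<in>J. f \<pi> j = \<sigma>}. w \<pi> j)"

definition generator :: "'v set \<Rightarrow> 'l set \<Rightarrow> ('v \<Rightarrow> 'l \<Rightarrow> 'v) \<Rightarrow> ('v \<Rightarrow> 'l \<Rightarrow> real) \<Rightarrow> 'v \<Rightarrow> 'v \<Rightarrow> real" where
  "generator V J f w \<pi> \<sigma> =
     (if \<pi> = \<sigma> then - (\<Sum>\<rho>\<in>V - {\<pi>}. rate V J f w \<pi> \<rho>) else rate V J f w \<pi> \<sigma>)"

definition digraph_edges :: "'v set \<Rightarrow> 'l set \<Rightarrow> ('v \<Rightarrow> 'l \<Rightarrow> 'v) \<Rightarrow> ('v \<Rightarrow> 'l \<Rightarrow> real) \<Rightarrow> ('v \<times> 'v) set" where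
  "digraph_edges V J f w = {(\<pi>, \<sigma>). \<pi> \<in> V \<and> \<sigma> \<in> V \<and> (\<exists>j\<in>J. f \<pi> j = \<sigma> \<and> w \<pi> j > 0)}"

definition irreducible_chain :: "'v set \<Rightarrow> 'l set \<Rightarrow> ('v \<Rightarrow> 'l \<Rightarrow> 'v) \<Rightarrow> ('v \<Rightarrow> 'l \<Rightarrow> real) \<Rightarrow> bool" where
  "irreducible_chain V J f w \<longleftrightarrow>
     (\<forall>\<pi>\<in>V. \<forall>\<sigma>\<in>V. (\<pi>, \<sigma>) \<in> (digraph_edges V J f w)\<^sup>*)"

definition stationary :: "'v set \<Rightarrow> 'l set \<Rightarrow> ('v \<Rightarrow> 'l \<Rightarrow> 'v) \<Rightarrow> ('v \<Rightarrow> 'l \<Rightarrow> real) \<Rightarrow> ('v \<Rightarrow> real) \<Rightarrow> bool" where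
  "stationary V J f w p \<longleftrightarrow>
     (\<forall>\<pi>. \<pi> \<notin> V \<longrightarrow> p \<pi> = 0) \<and> (\<forall>\<pi>\<in>V. p \<pi> \<ge> 0) \<and> (\<Sum>\<pi>\<in>V. p \<pi>) = 1 \<and>
     (\<forall>\<sigma>\<in>V. (\<Sum>\<pi>\<in>V. p \<pi> * generator V J f w \<pi> \<sigma>) = 0)"

definition unique_stationary :: "'v set \<Rightarrow> 'l set \<Rightarrow> ('v \<Rightarrow> 'l \<Rightarrow> 'v) \<Rightarrow> ('v \<Rightarrow> 'l \<Rightarrow> real) \<Rightarrow> bool" where
  "unique_stationary V J f w \<longleftrightarrow> (\<exists>!p. stationary V J f w p)"

end

theory Submission
  imports Defs
begin


lemma exists_stat:
  assumes "finite V" "V \<noteq> {}"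
   "\<forall>\<pi>\<in>V. \<forall>\<sigma>\<in>V. \<pi> \<noteq> \<sigma> \<longrightarrow> Q \<pi> \<sigma> \<ge> (0::real)"
   "\<forall>\<pi>\<in>V. (\<Sum>\<sigma>\<in>V. Q \<pi> \<sigma>) = 0"
  shows "\<exists>p. (\<forall>\<pi>\<in>V. p \<pi> \<ge> 0) \<and> (\<Sum>\<pi>\<in>V. p \<pi>) = 1 \<and> (\<forall>\<sigma>\<in>V. (\<Sum>\<pi>\<in>V. p \<pi> * Q \<pi> \<sigma>) = 0)"
  using assms
proof (induction V arbitrary: Q rule: finite_induct)
  case empty
  then show ?case by simp
next
  case (insert v F)
  have rowv: "Q v v + (\<Sum>\<sigma>\<in>F. Q v \<sigma>) = 0"
    using insert by (simp add: sum.insert)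
  have nn: "\<forall>\<sigma>\<in>F. Q v \<sigma> \<ge> 0" using insert by auto
  show ?case
  proof (cases "Q v v = 0")
    case True
    then have s0: "(\<Sum>\<sigma>\<in>F. Q v \<sigma>) = 0" using rowv by simp
    then have z: "\<forall>\<sigma>\<in>F. Q v \<sigma> = 0"
      using sum_nonneg_eq_0_iff[OF insert(1)] nn by blast
    define p where "p = (\<lambda>\<pi>. if \<pi> = v then (1::real) else 0)"
    have "\<forall>\<sigma>\<in>insert v F. (\<Sum>\<pi>\<in>insert v F. p \<pi> * Q \<pi> \<sigma>) = 0"
    proof
      fix \<sigma> assume "\<sigma> \<in> insert v F"
      have "(\<Sum>\<pi>\<in>insert v F. p \<pi> * Q \<pi> \<sigma>) = p v * Q v \<sigma> + (\<Sum>\<pi>\<in>F. p \<pi> * Q \<pi> \<sigma>)"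
        using insert by (simp add: sum.insert)
      also have "(\<Sum>\<pi>\<in>F. p \<pi> * Q \<pi> \<sigma>) = 0" using insert(2) by (auto simp: p_def intro!: sum.neutral)
      finally show "(\<Sum>\<pi>\<in>insert v F. p \<pi> * Q \<pi> \<sigma>) = 0"
        using True z \<open>\<sigma> \<in> insert v F\<close> by (auto simp: p_def)
    qed
    moreover have "(\<Sum>\<pi>\<in>insert v F. p \<pi>) = 1"
      using insert by (simp add: sum.insert p_def)
    moreover have "\<forall>\<pi>\<in>insert v F. p \<pi> \<ge> 0" by (simp add: p_def)
    ultimately show ?thesis by blast
  next
    case False
    define r where "r = - Q v v"
    have r: "r > 0"
    proof -
      have "(\<Sum>\<sigma>\<in>F. Q v \<sigma>) \<ge> 0" using nn by (simp add: sum_nonneg)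
      then show ?thesis using rowv False by (simp add: r_def)
    qed
    have sF: "(\<Sum>\<sigma>\<in>F. Q v \<sigma>) = r" using rowv by (simp add: r_def)
    have Fne: "F \<noteq> {}" using False rowv by auto
    define Q' where "Q' = (\<lambda>\<pi> \<sigma>. Q \<pi> \<sigma> + Q \<pi> v * Q v \<sigma> / r)"
    have vF: "v \<notin> F" by fact
    have h1: "\<forall>\<pi>\<in>F. \<forall>\<sigma>\<in>F. \<pi> \<noteq> \<sigma> \<longrightarrow> Q' \<pi> \<sigma> \<ge> 0"
    proof (intro ballI impI)
      fix \<pi> \<sigma> assume a: "\<pi> \<in> F" "\<sigma> \<in> F" "\<pi> \<noteq> \<sigma>"
      have "Q \<pi> \<sigma> \<ge> 0" using insert(5) a vF by blast
      moreover have "Q \<pi> v \<ge> 0" using insert(5) a vF by (metis insertCI)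
      moreover have "Q v \<sigma> \<ge> 0" using insert(5) a vF by (metis insertCI)
      ultimately show "Q' \<pi> \<sigma> \<ge> 0" unfolding Q'_def using r by (simp add: add_nonneg_nonneg)
    qed
    have h2: "\<forall>\<pi>\<in>F. (\<Sum>\<sigma>\<in>F. Q' \<pi> \<sigma>) = 0"
    proof
      fix \<pi> assume a: "\<pi> \<in> F"
      have row: "Q \<pi> v + (\<Sum>\<sigma>\<in>F. Q \<pi> \<sigma>) = 0" using insert(6) a insert(1,2) by (simp add: sum.insert)
      have "(\<Sum>\<sigma>\<in>F. Q' \<pi> \<sigma>) = (\<Sum>\<sigma>\<in>F. Q \<pi> \<sigma>) + Q \<pi> v / r * (\<Sum>\<sigma>\<in>F. Q v \<sigma>)"
        unfolding Q'_def by (simp add: sum.distrib sum_distrib_left)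
      also have "\<dots> = (\<Sum>\<sigma>\<in>F. Q \<pi> \<sigma>) + Q \<pi> v" using sF r by simp
      finally show "(\<Sum>\<sigma>\<in>F. Q' \<pi> \<sigma>) = 0" using row by simp
    qed
    obtain p' where p': "\<forall>\<pi>\<in>F. p' \<pi> \<ge> 0" "(\<Sum>\<pi>\<in>F. p' \<pi>) = 1"
      "\<forall>\<sigma>\<in>F. (\<Sum>\<pi>\<in>F. p' \<pi> * Q' \<pi> \<sigma>) = 0"
      using insert(3)[OF Fne h1 h2] by blast
    define pv where "pv = (\<Sum>\<rho>\<in>F. p' \<rho> * Q \<rho> v) / r"
    have pv: "pv \<ge> 0"
    proof -
      have "\<forall>\<rho>\<in>F. p' \<rho> * Q \<rho> v \<ge> 0" using p'(1) insert(5) vF by (metis insertCI mult_nonneg_nonneg)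
      then show ?thesis unfolding pv_def using r by (simp add: sum_nonneg)
    qed
    define p where "p = (\<lambda>\<pi>. if \<pi> = v then pv else p' \<pi>)"
    have pF: "\<And>g. (\<Sum>\<pi>\<in>F. p \<pi> * g \<pi>) = (\<Sum>\<pi>\<in>F. p' \<pi> * g \<pi>)"
      using vF by (auto simp: p_def intro!: sum.cong)
    have stat: "\<forall>\<sigma>\<in>insert v F. (\<Sum>\<pi>\<in>insert v F. p \<pi> * Q \<pi> \<sigma>) = 0"
    proof
      fix \<sigma> assume a: "\<sigma> \<in> insert v F"
      have e: "(\<Sum>\<pi>\<in>insert v F. p \<pi> * Q \<pi> \<sigma>) = pv * Q v \<sigma> + (\<Sum>\<pi>\<in>F. p' \<pi> * Q \<pi> \<sigma>)"
        using insert(1,2) pF by (simp add: sum.insert p_def)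
      show "(\<Sum>\<pi>\<in>insert v F. p \<pi> * Q \<pi> \<sigma>) = 0"
      proof (cases "\<sigma> = v")
        case True
        have "pv * Q v v = - (\<Sum>\<rho>\<in>F. p' \<rho> * Q \<rho> v)"
          unfolding pv_def using r by (simp add: r_def)
        then show ?thesis using e True by simp
      next
        case False
        then have "\<sigma> \<in> F" using a by simp
        then have "0 = (\<Sum>\<pi>\<in>F. p' \<pi> * Q' \<pi> \<sigma>)" using p'(3) by simp
        also have "\<dots> = (\<Sum>\<pi>\<in>F. p' \<pi> * Q \<pi> \<sigma> + (p' \<pi> * Q \<pi> v) * (Q v \<sigma> / r))"
          unfolding Q'_def by (intro sum.cong) (simp_all add: algebra_simps)
        also have "\<dots> = (\<Sum>\<pi>\<in>F. p' \<pi> * Q \<pi> \<sigma>) + (\<Sum>\<pi>\<in>F. p' \<pi> * Q \<pi> v) * (Q v \<sigma> / r)"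
          by (simp only: sum.distrib sum_distrib_right)
        also have "\<dots> = (\<Sum>\<pi>\<in>F. p' \<pi> * Q \<pi> \<sigma>) + pv * Q v \<sigma>"
          unfolding pv_def by simp
        finally show ?thesis using e by simp
      qed
    qed
    define s where "s = (\<Sum>\<pi>\<in>insert v F. p \<pi>)"
    have sF': "(\<Sum>\<pi>\<in>F. p \<pi>) = (\<Sum>\<pi>\<in>F. p' \<pi>)" using vF by (auto simp: p_def intro!: sum.cong)
    have s: "s = pv + 1" unfolding s_def using insert(1,2) p'(2) sF' by (simp add: p_def)
    then have spos: "s > 0" using pv by simp
    define q where "q = (\<lambda>\<pi>. p \<pi> / s)"
    have "\<forall>\<pi>\<in>insert v F. q \<pi> \<ge> 0" using p'(1) pv spos by (auto simp: q_def p_def)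
    moreover have "(\<Sum>\<pi>\<in>insert v F. q \<pi>) = 1" unfolding q_def using spos
      by (simp add: sum_divide_distrib[symmetric] s_def)
    moreover have "\<forall>\<sigma>\<in>insert v F. (\<Sum>\<pi>\<in>insert v F. q \<pi> * Q \<pi> \<sigma>) = 0"
    proof
      fix \<sigma> assume a: "\<sigma> \<in> insert v F"
      have "(\<Sum>\<pi>\<in>insert v F. q \<pi> * Q \<pi> \<sigma>) = (\<Sum>\<pi>\<in>insert v F. p \<pi> * Q \<pi> \<sigma>) / s"
        unfolding q_def by (simp add: sum_divide_distrib)
      then show "(\<Sum>\<pi>\<in>insert v F. q \<pi> * Q \<pi> \<sigma>) = 0" using stat a by auto
    qed
    ultimately show ?thesis by blast
  qed
qed



lemma gen_rowsum:
  assumes "finite V" "\<pi> \<in> V"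
  shows "(\<Sum>\<sigma>\<in>V. generator V J f w \<pi> \<sigma>) = 0"
proof -
  have "(\<Sum>\<sigma>\<in>V. generator V J f w \<pi> \<sigma>) = generator V J f w \<pi> \<pi> + (\<Sum>\<sigma>\<in>V - {\<pi>}. generator V J f w \<pi> \<sigma>)"
    using assms by (simp add: sum.remove)
  also have "(\<Sum>\<sigma>\<in>V - {\<pi>}. generator V J f w \<pi> \<sigma>) = (\<Sum>\<sigma>\<in>V - {\<pi>}. rate V J f w \<pi> \<sigma>)"
    by (intro sum.cong) (auto simp: generator_def)
  finally show ?thesis by (simp add: generator_def)
qed

lemma gen_offdiag:
  assumes "\<forall>j\<in>J. w \<pi> j \<ge> 0" "\<pi> \<noteq> \<sigma>"
  shows "generator V J f w \<pi> \<sigma> \<ge> 0"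
  using assms by (auto simp: generator_def rate_def intro!: sum_nonneg)

lemma gen_edge_pos:
  assumes "finite J" "\<forall>j\<in>J. w \<pi> j \<ge> 0" "\<pi> \<noteq> \<sigma>" "(\<pi>, \<sigma>) \<in> digraph_edges V J f w"
  shows "generator V J f w \<pi> \<sigma> > 0"
proof -
  obtain j where j: "j \<in> J" "f \<pi> j = \<sigma>" "w \<pi> j > 0" using assms(4) by (auto simp: digraph_edges_def)
  have "rate V J f w \<pi> \<sigma> > 0" unfolding rate_def
    by (rule sum_pos2[where i=j]) (use assms j in auto)
  then show ?thesis using assms(3) by (simp add: generator_def)
qed

lemma zero_propagate:
  assumes fin: "finite V" and e0: "\<forall>\<pi>\<in>V. e \<pi> \<ge> (0::real)"
    and st: "\<forall>\<sigma>\<in>V. (\<Sum>\<pi>\<in>V. e \<pi> * Q \<pi> \<sigma>) = 0"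
    and off: "\<forall>\<pi>\<in>V. \<forall>\<sigma>\<in>V. \<pi> \<noteq> \<sigma> \<longrightarrow> Q \<pi> \<sigma> \<ge> 0"
    and E: "\<forall>\<pi> \<sigma>. (\<pi>, \<sigma>) \<in> E \<longrightarrow> \<pi> \<in> V \<and> \<sigma> \<in> V \<and> (\<pi> \<noteq> \<sigma> \<longrightarrow> Q \<pi> \<sigma> > 0)"
    and path: "(\<pi>, \<sigma>0) \<in> E\<^sup>*" and z: "e \<sigma>0 = 0"
  shows "e \<pi> = 0"
  using path
proof (induction rule: converse_rtrancl_induct)
  case base
  then show ?case using z .
next
  case (step y zz)
  have yV: "y \<in> V" and zV: "zz \<in> V" using E step(1) by auto
  have "(\<Sum>\<pi>\<in>V. e \<pi> * Q \<pi> zz) = e zz * Q zz zz + (\<Sum>\<pi>\<in>V - {zz}. e \<pi> * Q \<pi> zz)"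
    using fin zV by (simp add: sum.remove)
  then have s0: "(\<Sum>\<pi>\<in>V - {zz}. e \<pi> * Q \<pi> zz) = 0" using st zV step(3) by simp
  have nn: "\<forall>\<pi>\<in>V - {zz}. e \<pi> * Q \<pi> zz \<ge> 0" using e0 off zV by auto
  show ?case
  proof (cases "y = zz")
    case True then show ?thesis using step(3) by simp
  next
    case False
    have "\<forall>\<pi>\<in>V - {zz}. e \<pi> * Q \<pi> zz = 0"
      using sum_nonneg_eq_0_iff[of "V - {zz}" "\<lambda>\<pi>. e \<pi> * Q \<pi> zz"] s0 nn fin by auto
    then have "e y * Q y zz = 0" using False yV by auto
    moreover have "Q y zz > 0" using E step(1) False by auto
    ultimately show ?thesis by simp
  qed
qed

lemma unique_stat_general:
  assumes fin: "finite V" and finJ: "finite J" and ne: "V \<noteq> {}"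
    and wnn: "\<forall>\<pi>\<in>V. \<forall>j\<in>J. w \<pi> j \<ge> 0"
    and irr: "irreducible_chain V J f w"
  shows "unique_stationary V J f w"
proof -
  let ?Q = "generator V J f w"
  have off: "\<forall>\<pi>\<in>V. \<forall>\<sigma>\<in>V. \<pi> \<noteq> \<sigma> \<longrightarrow> ?Q \<pi> \<sigma> \<ge> 0" using wnn by (intro ballI impI gen_offdiag) auto
  have rows: "\<forall>\<pi>\<in>V. (\<Sum>\<sigma>\<in>V. ?Q \<pi> \<sigma>) = 0" using gen_rowsum[OF fin] by blast
  have E: "\<forall>\<pi> \<sigma>. (\<pi>, \<sigma>) \<in> digraph_edges V J f w \<longrightarrow> \<pi> \<in> V \<and> \<sigma> \<in> V \<and> (\<pi> \<noteq> \<sigma> \<longrightarrow> ?Q \<pi> \<sigma> > 0)"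
  proof (intro allI impI conjI)
    fix \<pi> \<sigma> assume a: "(\<pi>, \<sigma>) \<in> digraph_edges V J f w"
    then show "\<pi> \<in> V" "\<sigma> \<in> V" by (auto simp: digraph_edges_def)
    then show "\<pi> \<noteq> \<sigma> \<Longrightarrow> ?Q \<pi> \<sigma> > 0" using \<open>\<pi> \<in> V\<close> wnn by (intro gen_edge_pos[OF finJ _ _ a]) auto
  qed
  obtain p where p: "\<forall>\<pi>\<in>V. p \<pi> \<ge> 0" "(\<Sum>\<pi>\<in>V. p \<pi>) = 1" "\<forall>\<sigma>\<in>V. (\<Sum>\<pi>\<in>V. p \<pi> * ?Q \<pi> \<sigma>) = 0"
    using exists_stat[OF fin ne off rows] by blast
  define p0 where "p0 = (\<lambda>\<pi>. if \<pi> \<in> V then p \<pi> else 0)"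
  have eq: "\<And>g. (\<Sum>\<pi>\<in>V. p0 \<pi> * g \<pi>) = (\<Sum>\<pi>\<in>V. p \<pi> * g \<pi>)" by (auto simp: p0_def intro!: sum.cong)
  have eq2: "(\<Sum>\<pi>\<in>V. p0 \<pi>) = (\<Sum>\<pi>\<in>V. p \<pi>)" by (auto simp: p0_def intro!: sum.cong)
  have ex: "stationary V J f w p0"
    unfolding stationary_def using p eq eq2 by (auto simp: p0_def)
  have pos: "\<forall>\<pi>\<in>V. q \<pi> > 0" if q: "stationary V J f w q" for q
  proof (rule ccontr)
    assume "\<not> (\<forall>\<pi>\<in>V. q \<pi> > 0)"
    then obtain \<pi>0 where \<pi>0: "\<pi>0 \<in> V" "q \<pi>0 = 0" using q unfolding stationary_def by force
    have "\<forall>\<pi>\<in>V. q \<pi> = 0"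
    proof
      fix \<pi> assume "\<pi> \<in> V"
      then have "(\<pi>, \<pi>0) \<in> (digraph_edges V J f w)\<^sup>*" using irr \<pi>0 by (auto simp: irreducible_chain_def)
      then show "q \<pi> = 0"
        using zero_propagate[where e=q, OF fin _ _ off E _ \<pi>0(2)] q unfolding stationary_def by blast
    qed
    then have "(\<Sum>\<pi>\<in>V. q \<pi>) = 0" by simp
    then show False using q unfolding stationary_def by simp
  qed
  have uniq: "q = p0" if q: "stationary V J f w q" for q
  proof -
    have pp: "\<forall>\<pi>\<in>V. p0 \<pi> > 0" using pos[OF ex] .
    define m where "m = Min ((\<lambda>\<pi>. q \<pi> / p0 \<pi>) ` V)"
    have "m \<in> (\<lambda>\<pi>. q \<pi> / p0 \<pi>) ` V" unfolding m_def using fin ne by (intro Min_in) auto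
    then obtain \<pi>0 where \<pi>0: "\<pi>0 \<in> V" "m = q \<pi>0 / p0 \<pi>0" by auto
    have mle: "\<forall>\<pi>\<in>V. m \<le> q \<pi> / p0 \<pi>" unfolding m_def using fin by auto
    define e where "e = (\<lambda>\<pi>. q \<pi> - m * p0 \<pi>)"
    have e0: "\<forall>\<pi>\<in>V. e \<pi> \<ge> 0"
    proof
      fix \<pi> assume a: "\<pi> \<in> V"
      then have "m * p0 \<pi> \<le> q \<pi>" using mle pp by (simp add: pos_le_divide_eq)
      then show "e \<pi> \<ge> 0" by (simp add: e_def)
    qed
    have ez: "e \<pi>0 = 0" using \<pi>0 pp by (auto simp: e_def)
    have est: "\<forall>\<sigma>\<in>V. (\<Sum>\<pi>\<in>V. e \<pi> * ?Q \<pi> \<sigma>) = 0"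
    proof
      fix \<sigma> assume "\<sigma> \<in> V"
      have "(\<Sum>\<pi>\<in>V. e \<pi> * ?Q \<pi> \<sigma>) = (\<Sum>\<pi>\<in>V. q \<pi> * ?Q \<pi> \<sigma>) - m * (\<Sum>\<pi>\<in>V. p0 \<pi> * ?Q \<pi> \<sigma>)"
        by (simp add: e_def algebra_simps sum_subtractf sum_distrib_left)
      then show "(\<Sum>\<pi>\<in>V. e \<pi> * ?Q \<pi> \<sigma>) = 0"
        using q ex \<open>\<sigma> \<in> V\<close> unfolding stationary_def by simp
    qed
    have eall: "\<forall>\<pi>\<in>V. e \<pi> = 0"
    proof
      fix \<pi> assume "\<pi> \<in> V"
      then have "(\<pi>, \<pi>0) \<in> (digraph_edges V J f w)\<^sup>*" using irr \<pi>0 by (auto simp: irreducible_chain_def)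
      then show "e \<pi> = 0" using zero_propagate[where e=e, OF fin e0 est off E _ ez] by blast
    qed
    then have qv: "\<forall>\<pi>\<in>V. q \<pi> = m * p0 \<pi>" by (simp add: e_def)
    have "(\<Sum>\<pi>\<in>V. q \<pi>) = m * (\<Sum>\<pi>\<in>V. p0 \<pi>)" using qv by (simp add: sum_distrib_left)
    then have "m = 1" using q ex unfolding stationary_def by simp
    show "q = p0"
    proof
      fix \<pi>
      show "q \<pi> = p0 \<pi>"
      proof (cases "\<pi> \<in> V")
        case True then show ?thesis using qv \<open>m = 1\<close> by simp
      next
        case False then show ?thesis using q ex unfolding stationary_def by simp
      qed
    qed
  qed
  show ?thesis unfolding unique_stationary_def using ex uniq by blast
qed



lemma ent_nth: "ent \<pi> (Suc k) = \<pi> ! k" by (simp add: ent_def)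

lemma inv_ent_nth:
  assumes "distinct \<pi>" "k < length \<pi>"
  shows "inv_ent \<pi> (\<pi> ! k) = Suc k"
  unfolding inv_ent_def
proof (rule the_equality)
  show "Suc k \<in> {1..length \<pi>} \<and> ent \<pi> (Suc k) = \<pi> ! k" using assms by (simp add: ent_def)
next
  fix a assume a: "a \<in> {1..length \<pi>} \<and> ent \<pi> a = \<pi> ! k"
  then have "\<pi> ! (a - 1) = \<pi> ! k" "a - 1 < length \<pi>" by (auto simp: ent_def)
  then have "a - 1 = k" using assms nth_eq_iff_index_eq by blast
  then show "a = Suc k" using a by auto
qed

lemma linext_iff:
  assumes "P \<subseteq> {1..n} \<times> {1..n}"
  shows "\<pi> \<in> linext n P \<longleftrightarrow> is_perm n \<pi> \<and> (\<forall>k<n. \<forall>l<n. prec P (\<pi>!k) (\<pi>!l) \<longrightarrow> k < l)"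
proof
  assume a: "\<pi> \<in> linext n P"
  then have p: "is_perm n \<pi>" by (simp add: linext_def)
  show "is_perm n \<pi> \<and> (\<forall>k<n. \<forall>l<n. prec P (\<pi>!k) (\<pi>!l) \<longrightarrow> k < l)"
  proof (intro conjI allI impI p)
    fix k l assume "k < n" "l < n" "prec P (\<pi>!k) (\<pi>!l)"
    then have "inv_ent \<pi> (\<pi>!k) < inv_ent \<pi> (\<pi>!l)" using a by (simp add: linext_def)
    then show "k < l" using p \<open>k < n\<close> \<open>l < n\<close> by (simp add: inv_ent_nth is_perm_def)
  qed
next
  assume a: "is_perm n \<pi> \<and> (\<forall>k<n. \<forall>l<n. prec P (\<pi>!k) (\<pi>!l) \<longrightarrow> k < l)"
  show "\<pi> \<in> linext n P" unfolding linext_def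
  proof (intro CollectI conjI allI impI)
    show "is_perm n \<pi>" using a by simp
    fix i j assume pr: "prec P i j"
    then have "i \<in> set \<pi>" "j \<in> set \<pi>" using assms a by (auto simp: prec_def is_perm_def)
    then obtain k l where kl: "k < n" "l < n" "\<pi>!k = i" "\<pi>!l = j"
      using a by (auto simp: in_set_conv_nth is_perm_def)
    then have "k < l" using a pr by blast
    then show "inv_ent \<pi> i < inv_ent \<pi> j" using kl a by (auto simp: inv_ent_nth is_perm_def)
  qed
qed

lemma tau_swap:
  assumes "1 \<le> j" "j < length \<pi>"
  shows "tau P \<pi> j = (if incomparable P (\<pi>!(j-1)) (\<pi>!j) then \<pi>[j-1 := \<pi>!j, j := \<pi>!(j-1)] else \<pi>)"
  using assms by (simp add: tau_def ent_def)

lemma tau_length[simp]: "length (tau P \<pi> j) = length \<pi>"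
  by (simp add: tau_def)

lemma tau_invol:
  assumes "1 \<le> j" "j < length \<pi>"
  shows "tau P (tau P \<pi> j) j = \<pi>"
proof (cases "incomparable P (\<pi>!(j-1)) (\<pi>!j)")
  case True
  let ?s = "\<pi>[j-1 := \<pi>!j, j := \<pi>!(j-1)]"
  have s1: "?s ! (j-1) = \<pi>!j" and s2: "?s ! j = \<pi>!(j-1)" using assms by (auto simp: nth_list_update)
  have inc: "incomparable P (?s!(j-1)) (?s!j)" using True s1 s2 by (auto simp: incomparable_def)
  have "tau P ?s j = ?s[j-1 := ?s!j, j := ?s!(j-1)]" using tau_swap[of j ?s P] assms inc by simp
  also have "\<dots> = \<pi>" using assms s1 s2 by (auto simp: list_eq_iff_nth_eq nth_list_update)
  finally show ?thesis using tau_swap[of j \<pi> P] assms True by simp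
next
  case False
  then show ?thesis using tau_swap[of j \<pi> P] assms by simp
qed

lemma tau_in:
  assumes P: "P \<subseteq> {1..n} \<times> {1..n}" and pi: "\<pi> \<in> linext n P" and j: "1 \<le> j" "j < n"
  shows "tau P \<pi> j \<in> linext n P"
proof (cases "incomparable P (\<pi>!(j-1)) (\<pi>!j)")
  case False
  then show ?thesis using tau_swap[of j \<pi> P] pi j by (simp add: linext_def is_perm_def)
next
  case True
  have perm: "is_perm n \<pi>" and ord: "\<forall>k<n. \<forall>l<n. prec P (\<pi>!k) (\<pi>!l) \<longrightarrow> k < l"
    using pi linext_iff[OF P] by auto
  have len: "length \<pi> = n" using perm by (simp add: is_perm_def)
  let ?s = "\<pi>[j-1 := \<pi>!j, j := \<pi>!(j-1)]"
  have eq: "tau P \<pi> j = ?s" using tau_swap[of j \<pi> P] True j len by simp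
  define t where "t = (\<lambda>k::nat. if k = j - 1 then j else if k = j then j - 1 else k)"
  have sn: "\<And>k. k < n \<Longrightarrow> ?s ! k = \<pi> ! (t k)" using j len by (auto simp: t_def nth_list_update)
  have tn: "\<And>k. k < n \<Longrightarrow> t k < n" using j by (auto simp: t_def)
  have ps: "is_perm n ?s" using perm j len by (simp add: is_perm_def)
  have "\<forall>k<n. \<forall>l<n. prec P (?s!k) (?s!l) \<longrightarrow> k < l"
  proof (intro allI impI)
    fix k l assume kl: "k < n" "l < n" "prec P (?s!k) (?s!l)"
    then have pr: "prec P (\<pi>!(t k)) (\<pi>!(t l))" using sn by simp
    then have tkl: "t k < t l" using ord tn kl by blast
    show "k < l"
    proof (rule ccontr)
      assume "\<not> k < l"
      then have "l = j - 1 \<and> k = j" using tkl j unfolding t_def by (simp split: if_splits)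
      then have "t k = j - 1 \<and> t l = j" using j unfolding t_def by simp
      then show False using pr True by (auto simp: incomparable_def)
    qed
  qed
  then show ?thesis using eq ps linext_iff[OF P] by simp
qed


definition idn :: "nat \<Rightarrow> nat list" where "idn n = map Suc [0..<n]"

lemma idn_nth: "k < n \<Longrightarrow> idn n ! k = Suc k"
  by (simp add: idn_def)

lemma idn_props: "sorted (idn n)" "distinct (idn n)" "set (idn n) = {1..n}" "length (idn n) = n"
  by (auto simp: idn_def sorted_map distinct_map image_Suc_lessThan)

lemma idn_in:
  assumes P: "P \<subseteq> {1..n} \<times> {1..n}" and nat: "natural_labeling n P"
  shows "idn n \<in> linext n P"
proof -
  have "is_perm n (idn n)" using idn_props by (simp add: is_perm_def)
  moreover have "\<forall>k<n. \<forall>l<n. prec P (idn n!k) (idn n!l) \<longrightarrow> k < l"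
    using nat by (auto simp: idn_nth natural_labeling_def)
  ultimately show ?thesis using linext_iff[OF P] by simp
qed

lemma descent:
  assumes "is_perm n \<pi>" "\<pi> \<noteq> idn n"
  shows "\<exists>k. Suc k < n \<and> \<pi>!(Suc k) < \<pi>!k"
proof (rule ccontr)
  assume "\<not> ?thesis"
  then have "\<forall>i. Suc i < length \<pi> \<longrightarrow> \<pi>!i \<le> \<pi>!Suc i" using assms(1)
    unfolding is_perm_def by (metis not_less)
  then have "sorted \<pi>" by (simp add: sorted_iff_nth_Suc)
  moreover have "sorted (idn n)" "distinct (idn n)" "set (idn n) = set \<pi>"
    using assms(1) idn_props by (simp_all add: is_perm_def)
  ultimately have "\<pi> = idn n" using sorted_distinct_set_unique[of \<pi> "idn n"] assms(1) unfolding is_perm_def by blast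
  then show False using assms(2) by simp
qed

definition M :: "nat list \<Rightarrow> nat" where "M \<pi> = (\<Sum>i<length \<pi>. i * \<pi>!i)"

lemma sum_two_change:
  fixes f g :: "nat \<Rightarrow> nat"
  assumes "Suc k < N" "\<forall>i<N. i \<noteq> k \<and> i \<noteq> Suc k \<longrightarrow> g i = f i"
  shows "sum g {..<N} + f k + f (Suc k) = sum f {..<N} + g k + g (Suc k)"
proof -
  have sub: "{k, Suc k} \<subseteq> {..<N}" using assms by auto
  have f: "sum f {..<N} = sum f ({..<N} - {k, Suc k}) + (f k + f (Suc k))"
    using sum.subset_diff[OF sub, of f] by simp
  have g: "sum g {..<N} = sum g ({..<N} - {k, Suc k}) + (g k + g (Suc k))"
    using sum.subset_diff[OF sub, of g] by simp
  have "sum g ({..<N} - {k, Suc k}) = sum f ({..<N} - {k, Suc k})"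
    using assms by (intro sum.cong) auto
  then show ?thesis using f g by simp
qed

lemma M_swap:
  assumes "Suc k < length \<pi>" "\<pi>!(Suc k) < \<pi>!k"
  shows "M (\<pi>[k := \<pi>!Suc k, Suc k := \<pi>!k]) > M \<pi>"
proof -
  let ?s = "\<pi>[k := \<pi>!Suc k, Suc k := \<pi>!k]"
  have "sum (\<lambda>i. i * ?s!i) {..<length \<pi>} + k * \<pi>!k + Suc k * \<pi>!Suc k
      = sum (\<lambda>i. i * \<pi>!i) {..<length \<pi>} + k * ?s!k + Suc k * ?s!Suc k"
    by (rule sum_two_change[OF assms(1)]) (auto simp: nth_list_update)
  moreover have "?s!k = \<pi>!Suc k" "?s!Suc k = \<pi>!k" using assms by (auto simp: nth_list_update)
  ultimately have "M ?s + k * \<pi>!k + Suc k * \<pi>!Suc k = M \<pi> + k * \<pi>!Suc k + Suc k * \<pi>!k"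
    by (simp add: M_def)
  then show ?thesis using assms(2) by (simp add: algebra_simps)
qed

lemma M_bound:
  assumes "is_perm n \<pi>"
  shows "M \<pi> \<le> n * (n * n)"
proof -
  have "\<And>i. i \<in> {..<n} \<Longrightarrow> i * \<pi>!i \<le> n * n"
  proof -
    fix i assume "i \<in> {..<n}"
    then have "i \<le> n" "\<pi>!i \<le> n" using assms nth_mem[of i \<pi>] by (auto simp: is_perm_def)
    then show "i * \<pi>!i \<le> n * n" by (simp add: mult_le_mono)
  qed
  then have "(\<Sum>i<n. i * \<pi>!i) \<le> (\<Sum>i<n. n * n)" by (rule sum_mono)
  then show ?thesis using assms by (simp add: M_def is_perm_def)
qed

definition R :: "nat \<Rightarrow> (nat \<times> nat) set \<Rightarrow> (nat list \<times> nat list) set" where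
  "R n P = {(\<pi>, \<sigma>). \<pi> \<in> linext n P \<and> (\<exists>j. 1 \<le> j \<and> j < n \<and> \<sigma> = tau P \<pi> j)}"

lemma reach_idn:
  assumes P: "P \<subseteq> {1..n} \<times> {1..n}" and nat: "natural_labeling n P"
  shows "\<pi> \<in> linext n P \<Longrightarrow> (\<pi>, idn n) \<in> (R n P)\<^sup>*"
proof (induction "n * (n * n) - M \<pi>" arbitrary: \<pi> rule: less_induct)
  case less
  show ?case
  proof (cases "\<pi> = idn n")
    case True then show ?thesis by simp
  next
    case False
    have perm: "is_perm n \<pi>" and ord: "\<forall>k<n. \<forall>l<n. prec P (\<pi>!k) (\<pi>!l) \<longrightarrow> k < l"
      using less.prems linext_iff[OF P] by auto
    have len: "length \<pi> = n" using perm by (simp add: is_perm_def)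
    obtain k where k: "Suc k < n" "\<pi>!(Suc k) < \<pi>!k" using descent[OF perm False] by blast
    have inc: "incomparable P (\<pi>!k) (\<pi>!Suc k)"
    proof -
      have "\<not> prec P (\<pi>!k) (\<pi>!Suc k)" using k nat unfolding natural_labeling_def by (meson order.asym)
      moreover have "\<not> prec P (\<pi>!Suc k) (\<pi>!k)"
      proof
        assume h: "prec P (\<pi>!Suc k) (\<pi>!k)"
        have "k < n" using k(1) by simp
        then have "Suc k < k" using ord[rule_format, of "Suc k" k] k(1) h by blast
        then show False by simp
      qed
      ultimately show ?thesis by (simp add: incomparable_def)
    qed
    let ?s = "tau P \<pi> (Suc k)"
    have seq: "?s = \<pi>[k := \<pi>!Suc k, Suc k := \<pi>!k]" using tau_swap[of "Suc k" \<pi> P] k len inc by simp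
    have sin: "?s \<in> linext n P" using tau_in[OF P less.prems, of "Suc k"] k by simp
    have "M ?s > M \<pi>" using seq M_swap[of k \<pi>] k len by simp
    moreover have "M ?s \<le> n * (n * n)" using sin M_bound by (simp add: linext_def)
    ultimately have "n * (n * n) - M ?s < n * (n * n) - M \<pi>" by simp
    then have "(?s, idn n) \<in> (R n P)\<^sup>*" using less.hyps sin by blast
    moreover have "(\<pi>, ?s) \<in> R n P" using less.prems k unfolding R_def by auto
    ultimately show ?thesis by (meson converse_rtrancl_into_rtrancl)
  qed
qed

lemma R_sym: "(\<pi>, \<sigma>) \<in> R n P \<Longrightarrow> P \<subseteq> {1..n} \<times> {1..n} \<Longrightarrow> (\<sigma>, \<pi>) \<in> R n P"
  unfolding R_def
proof (clarify)
  fix j assume a: "\<pi> \<in> linext n P" "1 \<le> j" "j < n" and P: "P \<subseteq> {1..n} \<times> {1..n}"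
  have "length \<pi> = n" using a by (simp add: linext_def is_perm_def)
  then have "\<pi> = tau P (tau P \<pi> j) j" using tau_invol a by simp
  then show "tau P \<pi> j \<in> linext n P \<and> (\<exists>ja\<ge>1. ja < n \<and> \<pi> = tau P (tau P \<pi> j) ja)"
    using tau_in[OF P a] a by blast
qed

lemma R_conn:
  assumes P: "P \<subseteq> {1..n} \<times> {1..n}" and nat: "natural_labeling n P"
    and a: "\<pi> \<in> linext n P" "\<sigma> \<in> linext n P"
  shows "(\<pi>, \<sigma>) \<in> (R n P)\<^sup>*"
proof -
  have conv: "(R n P)\<inverse> \<subseteq> R n P" using R_sym[OF _ P] by auto
  have "(\<sigma>, idn n) \<in> (R n P)\<^sup>*" using reach_idn[OF P nat a(2)] .
  then have "(idn n, \<sigma>) \<in> ((R n P)\<inverse>)\<^sup>*" by (simp add: rtrancl_converse)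
  then have "(idn n, \<sigma>) \<in> (R n P)\<^sup>*" using rtrancl_mono[OF conv] by blast
  then show ?thesis using reach_idn[OF P nat a(1)] by (meson rtrancl_trans)
qed



lemma orbit_back:
  assumes fin: "finite V" and gV: "\<forall>y\<in>V. g y \<in> V" and inj: "inj_on g V"
    and edge: "\<forall>y\<in>V. (y, g y) \<in> D" and y: "y \<in> V"
  shows "(g y, y) \<in> D\<^sup>*"
proof -
  have pow_in: "\<And>z. z \<in> V \<Longrightarrow> (g^^k) z \<in> V" for k
    by (induction k) (use gV in auto)
  have path: "\<And>z. z \<in> V \<Longrightarrow> (z, (g^^k) z) \<in> D\<^sup>*" for k
  proof (induction k)
    case 0 then show ?case by simp
  next
    case (Suc k)
    then have "(z, (g^^k) z) \<in> D\<^sup>*" by simp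
    moreover have "((g^^k) z, g ((g^^k) z)) \<in> D" using edge pow_in[OF Suc.prems] by blast
    ultimately show ?case by (simp add: rtrancl_into_rtrancl)
  qed
  have inj_pow: "\<And>u v. u \<in> V \<Longrightarrow> v \<in> V \<Longrightarrow> (g^^k) u = (g^^k) v \<Longrightarrow> u = v" for k
  proof (induction k)
    case 0 then show ?case by simp
  next
    case (Suc k)
    have "g ((g^^k) u) = g ((g^^k) v)" using Suc.prems by simp
    then have "(g^^k) u = (g^^k) v" using inj pow_in Suc.prems unfolding inj_on_def by blast
    then show ?case using Suc.IH Suc.prems by blast
  qed
  have "\<not> inj_on (\<lambda>k. (g^^k) y) {..card V}"
  proof
    assume "inj_on (\<lambda>k. (g^^k) y) {..card V}"
    moreover have "(\<lambda>k. (g^^k) y) ` {..card V} \<subseteq> V" using pow_in y by auto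
    ultimately have "card {..card V} \<le> card V" using card_inj_on_le fin by blast
    then show False by simp
  qed
  then obtain a b where ab: "a < b" "(g^^a) y = (g^^b) y"
    unfolding inj_on_def by (metis linorder_neq_iff)
  have "(g^^b) y = (g^^a) ((g^^(b-a)) y)"
    using ab(1) funpow_add[of a "b - a" g] by simp
  then have "(g^^(b-a)) y = y" using inj_pow[of "(g^^(b-a)) y" y a] ab pow_in y by simp
  moreover obtain m where m: "b - a = Suc m" using ab(1) by (metis Suc_diff_Suc)
  ultimately have "(g^^m) (g y) = y" by (simp add: funpow_Suc_right del: funpow.simps)
  moreover have "(g y, (g^^m) (g y)) \<in> D\<^sup>*" using path gV y by blast
  ultimately show ?thesis by simp
qed

lemma fold_in:
  assumes P: "P \<subseteq> {1..n} \<times> {1..n}"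
  shows "\<forall>i\<in>set L. 1 \<le> i \<and> i < n \<Longrightarrow> \<pi> \<in> linext n P \<Longrightarrow> fold (\<lambda>i \<sigma>. tau P \<sigma> i) L \<pi> \<in> linext n P"
proof (induction L arbitrary: \<pi>)
  case Nil then show ?case by simp
next
  case (Cons i L)
  then have "tau P \<pi> i \<in> linext n P" using tau_in[OF P] by simp
  then show ?case using Cons by simp
qed

lemma fold_inj:
  assumes P: "P \<subseteq> {1..n} \<times> {1..n}"
  shows "\<forall>i\<in>set L. 1 \<le> i \<and> i < n \<Longrightarrow> a \<in> linext n P \<Longrightarrow> b \<in> linext n P
    \<Longrightarrow> fold (\<lambda>i \<sigma>. tau P \<sigma> i) L a = fold (\<lambda>i \<sigma>. tau P \<sigma> i) L b \<Longrightarrow> a = b"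
proof (induction L arbitrary: a b)
  case Nil then show ?case by simp
next
  case (Cons i L)
  have i: "1 \<le> i" "i < n" using Cons.prems by auto
  have "tau P a i \<in> linext n P" "tau P b i \<in> linext n P" using tau_in[OF P] Cons.prems i by auto
  then have "tau P a i = tau P b i" using Cons by simp
  then have "tau P (tau P a i) i = tau P (tau P b i) i" by simp
  moreover have "length a = n" "length b = n" using Cons.prems by (auto simp: linext_def is_perm_def)
  ultimately show ?case using tau_invol i by metis
qed

lemma prom_in:
  assumes P: "P \<subseteq> {1..n} \<times> {1..n}" and "\<pi> \<in> linext n P" "1 \<le> j"
  shows "prom n P \<pi> j \<in> linext n P"
  unfolding prom_def using fold_in[OF P] assms by simp

lemma prom_inj:
  assumes P: "P \<subseteq> {1..n} \<times> {1..n}" and "1 \<le> j"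
  shows "inj_on (\<lambda>\<pi>. prom n P \<pi> j) (linext n P)"
  unfolding prom_def inj_on_def using fold_inj[OF P, of "[j..<n]"] assms by simp

lemma prom_step:
  assumes "i < n"
  shows "prom n P \<pi> i = prom n P (tau P \<pi> i) (Suc i)"
  using assms by (simp add: prom_def upt_conv_Cons)

lemma finite_linext: "finite (linext n P)"
proof -
  have "linext n P \<subseteq> {xs. set xs \<subseteq> {1..n} \<and> length xs = n}" by (auto simp: linext_def is_perm_def)
  moreover have "finite {xs. set xs \<subseteq> {1..n} \<and> length xs = n}" by (rule finite_lists_length_eq) simp
  ultimately show ?thesis by (rule finite_subset)
qed

lemma irr_tau:
  assumes P: "P \<subseteq> {1..n} \<times> {1..n}" and nat: "natural_labeling n P"
    and w: "\<forall>\<pi>\<in>linext n P. \<forall>j\<in>{1..<n}. w \<pi> j > 0"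
  shows "irreducible_chain (linext n P) {1..<n} (tau P) w"
proof -
  have "R n P \<subseteq> digraph_edges (linext n P) {1..<n} (tau P) w"
    using w tau_in[OF P] unfolding R_def digraph_edges_def by auto
  then show ?thesis unfolding irreducible_chain_def using R_conn[OF P nat] rtrancl_mono by blast
qed

lemma irr_prom:
  assumes P: "P \<subseteq> {1..n} \<times> {1..n}" and nat: "natural_labeling n P"
    and w: "\<forall>\<pi>\<in>linext n P. \<forall>j\<in>{1..n}. w \<pi> j > 0"
  shows "irreducible_chain (linext n P) {1..n} (prom n P) w"
proof -
  let ?D = "digraph_edges (linext n P) {1..n} (prom n P) w"
  have De: "\<And>\<pi> j. \<pi> \<in> linext n P \<Longrightarrow> 1 \<le> j \<Longrightarrow> j \<le> n \<Longrightarrow> (\<pi>, prom n P \<pi> j) \<in> ?D"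
    using w prom_in[OF P] unfolding digraph_edges_def by auto
  have "R n P \<subseteq> ?D\<^sup>*"
  proof
    fix x assume "x \<in> R n P"
    then obtain \<pi> i where x: "x = (\<pi>, tau P \<pi> i)" "\<pi> \<in> linext n P" "1 \<le> i" "i < n"
      unfolding R_def by auto
    let ?g = "\<lambda>\<rho>. prom n P \<rho> (Suc i)"
    let ?s = "tau P \<pi> i"
    have sV: "?s \<in> linext n P" using tau_in[OF P] x by simp
    have "(\<pi>, ?g ?s) \<in> ?D" using De[of \<pi> i] x prom_step[of i n P \<pi>] by simp
    moreover have "(?g ?s, ?s) \<in> ?D\<^sup>*"
      by (rule orbit_back[OF finite_linext]) (use prom_in[OF P] prom_inj[OF P] De x sV in auto)
    ultimately show "x \<in> ?D\<^sup>*" using x by (meson converse_rtrancl_into_rtrancl)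
  qed
  then have "(R n P)\<^sup>* \<subseteq> ?D\<^sup>*" by (rule rtrancl_subset_rtrancl)
  then show ?thesis unfolding irreducible_chain_def using R_conn[OF P nat] by blast
qed


lemma ent_range:
  assumes "\<pi> \<in> linext n P" "j \<in> {1..n}"
  shows "ent \<pi> j \<in> {1..n}"
proof -
  have "length \<pi> = n" "set \<pi> = {1..n}" using assms(1) by (auto simp: linext_def is_perm_def)
  moreover have "j - 1 < n" using assms(2) by auto
  ultimately show ?thesis unfolding ent_def by (metis nth_mem)
qed

theorem corollary4p2:
  fixes n :: nat and P :: "(nat \<times> nat) set" and x :: "nat \<Rightarrow> real"
  assumes "poset_on n P" and "natural_labeling n P"
    and "\<forall>i\<in>{1..n}. x i > 0"
  shows
    "irreducible_chain (linext n P) {1..<n} (tau P) (\<lambda>\<pi> j. x j)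
     \<and> unique_stationary (linext n P) {1..<n} (tau P) (\<lambda>\<pi> j. x j)
     \<and> irreducible_chain (linext n P) {1..<n} (tau P) (\<lambda>\<pi> j. x (ent \<pi> j))
     \<and> unique_stationary (linext n P) {1..<n} (tau P) (\<lambda>\<pi> j. x (ent \<pi> j))
     \<and> irreducible_chain (linext n P) {1..n} (prom n P) (\<lambda>\<pi> j. x j)
     \<and> unique_stationary (linext n P) {1..n} (prom n P) (\<lambda>\<pi> j. x j)
     \<and> irreducible_chain (linext n P) {1..n} (prom n P) (\<lambda>\<pi> j. x (ent \<pi> j))
     \<and> unique_stationary (linext n P) {1..n} (prom n P) (\<lambda>\<pi> j. x (ent \<pi> j))"
proof -
  have P: "P \<subseteq> {1..n} \<times> {1..n}" using assms(1) by (simp add: poset_on_def)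
  have nat: "natural_labeling n P" by fact
  have ne: "linext n P \<noteq> {}" using idn_in[OF P nat] by blast
  have fin: "finite (linext n P)" by (rule finite_linext)
  have w1: "\<forall>\<pi>\<in>linext n P. \<forall>j\<in>{1..n}. (\<lambda>\<pi> j. x j) \<pi> j > 0" using assms(3) by simp
  have w1': "\<forall>\<pi>\<in>linext n P. \<forall>j\<in>{1..<n}. (\<lambda>\<pi> j. x j) \<pi> j > 0" using assms(3) by simp
  have w2: "\<forall>\<pi>\<in>linext n P. \<forall>j\<in>{1..n}. (\<lambda>\<pi> j. x (ent \<pi> j)) \<pi> j > 0"
    using assms(3) ent_range by blast
  have w2': "\<forall>\<pi>\<in>linext n P. \<forall>j\<in>{1..<n}. (\<lambda>\<pi> j. x (ent \<pi> j)) \<pi> j > 0"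
    using w2 by auto
  have i1: "irreducible_chain (linext n P) {1..<n} (tau P) (\<lambda>\<pi> j. x j)" by (rule irr_tau[OF P nat w1'])
  have i2: "irreducible_chain (linext n P) {1..<n} (tau P) (\<lambda>\<pi> j. x (ent \<pi> j))" by (rule irr_tau[OF P nat w2'])
  have i3: "irreducible_chain (linext n P) {1..n} (prom n P) (\<lambda>\<pi> j. x j)" by (rule irr_prom[OF P nat w1])
  have i4: "irreducible_chain (linext n P) {1..n} (prom n P) (\<lambda>\<pi> j. x (ent \<pi> j))" by (rule irr_prom[OF P nat w2])
  have u1: "unique_stationary (linext n P) {1..<n} (tau P) (\<lambda>\<pi> j. x j)"
    by (rule unique_stat_general[OF fin _ ne _ i1]) (use w1' in \<open>auto simp: less_imp_le\<close>)
  have u2: "unique_stationary (linext n P) {1..<n} (tau P) (\<lambda>\<pi> j. x (ent \<pi> j))"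
    by (rule unique_stat_general[OF fin _ ne _ i2]) (use w2' in \<open>auto simp: less_imp_le\<close>)
  have u3: "unique_stationary (linext n P) {1..n} (prom n P) (\<lambda>\<pi> j. x j)"
    by (rule unique_stat_general[OF fin _ ne _ i3]) (use w1 in \<open>auto simp: less_imp_le\<close>)
  have u4: "unique_stationary (linext n P) {1..n} (prom n P) (\<lambda>\<pi> j. x (ent \<pi> j))"
    by (rule unique_stat_general[OF fin _ ne _ i4]) (use w2 in \<open>auto simp: less_imp_le\<close>)
  show ?thesis using i1 i2 i3 i4 u1 u2 u3 u4 by blast
qed

end
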